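(* Let $H_i:[0,T]\times\mathbb{R}^n\times\mathbb{R}^n\to\mathbb{R}$, $i\in\mathbb{N}\cup\{0\}$, be continuous in all variables and convex in the last variable, and let $\mathsf{e}_i:[0,T]\times\mathbb{R}^n\times\mathbb{R}^{n+1}\to\mathbb{R}^{n+1}$ be defined by $\mathsf{e}_i(t,x,a)=s_{n+1}(\Phi_i(t,x,a))$, where $\Phi_i(t,x,a)=E_i(t,x)\cap\bar B(a,2d(a,E_i(t,x)))$ and $E_i(t,x)=\mathrm{epi}\,H_i^*(t,x,\cdot)$. If $H_i\to H_0$ uniformly on compact subsets of $[0,T]\times\mathbb{R}^n\times\mathbb{R}^n$, then for every $(t_0,x_0,a_0)\in[0,T]\times\mathbb{R}^n\times\mathbb{R}^{n+1}$ and every sequence $(t_i,x_i,a_i)\to(t_0,x_0,a_0)$ we have $\mathsf{e}_i(t_i,x_i,a_i)\to\mathsf{e}_0(t_0,x_0,a_0)$.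
   Context: $H_i^*(t,x,v)=\sup_p\{\langle v,p\rangle-H_i(t,x,p)\}$; $\mathrm{epi}\,\varphi=\{(v,\eta)\in\mathbb{R}^n\times\mathbb{R}:\varphi(v)\le\eta\}$; $d(a,K)=\inf_{\xi\in K}|a-\xi|$; $\bar B(a,r)$ closed ball. Steiner point of a nonempty compact convex $K\subset\mathbb{R}^m$: $s_m(K)=m\int_{S^{m-1}}p\,\max_{y\in K}\langle p,y\rangle\,\mu(dp)$, where $\mu$ is the rotation-invariant probability measure on the unit sphere $S^{m-1}$. *)

theory Defs
  imports "HOL-Analysis.Analysis"
begin

definition conj_H :: "(real \<Rightarrow> 'x \<Rightarrow> 'a::real_inner \<Rightarrow> real) \<Rightarrow> real \<Rightarrow> 'x \<Rightarrow> 'a \<Rightarrow> ereal" where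
  "conj_H H t x v = (SUP p. ereal (v \<bullet> p - H t x p))"

definition epi :: "('a \<Rightarrow> ereal) \<Rightarrow> ('a \<times> real) set" where
  "epi f = {(v, \<eta>). f v \<le> ereal \<eta>}"

definition E_set :: "(real \<Rightarrow> 'x \<Rightarrow> 'a::real_inner \<Rightarrow> real) \<Rightarrow> real \<Rightarrow> 'x \<Rightarrow> ('a \<times> real) set" where
  "E_set H t x = epi (conj_H H t x)"

text \<open>Rotation-invariant probability measure on the unit sphere: the image of the
  normalized Lebesgue measure on the open unit ball under radial projection.\<close>
definition sphere_measure :: "'a::euclidean_space measure" where
  "sphere_measure = distr (uniform_measure lborel (ball 0 1)) borel (\<lambda>x. sgn x)"

definition steiner_point :: "'a::euclidean_space set \<Rightarrow> 'a" where
  "steiner_point K = real DIM('a) *\<^sub>R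
     (\<integral>p. (Sup ((\<lambda>y. p \<bullet> y) ` K)) *\<^sub>R p \<partial>sphere_measure)"

definition Phi_set :: "(real \<Rightarrow> 'x \<Rightarrow> 'a::euclidean_space \<Rightarrow> real) \<Rightarrow> real \<Rightarrow> 'x \<Rightarrow> 'a \<times> real \<Rightarrow> ('a \<times> real) set" where
  "Phi_set H t x a = E_set H t x \<inter> cball a (2 * infdist a (E_set H t x))"

definition e_sel :: "(real \<Rightarrow> 'x \<Rightarrow> 'a::euclidean_space \<Rightarrow> real) \<Rightarrow> real \<Rightarrow> 'x \<Rightarrow> 'a \<times> real \<Rightarrow> 'a \<times> real" where
  "e_sel H t x a = steiner_point (Phi_set H t x a)"

end

theory Submission
  imports Defs
begin


definition supf :: "'b::euclidean_space set \<Rightarrow> 'b \<Rightarrow> real" where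
  "supf K p = Sup ((\<lambda>y. p \<bullet> y) ` K)"

lemma supf_upper:
  assumes "compact K" "y \<in> K" shows "p \<bullet> y \<le> supf K p"
proof -
  have "bounded ((\<lambda>y. p \<bullet> y) ` K)"
    using assms by (intro compact_imp_bounded compact_continuous_image) (auto intro: continuous_intros)
  then have "bdd_above ((\<lambda>y. p \<bullet> y) ` K)" by (rule bounded_imp_bdd_above)
  then show ?thesis unfolding supf_def using assms by (auto intro: cSup_upper)
qed

lemma supf_attained:
  assumes "compact K" "K \<noteq> {}" obtains y where "y \<in> K" "supf K p = p \<bullet> y"
proof -
  obtain y where y: "y \<in> K" "\<And>z. z \<in> K \<Longrightarrow> p \<bullet> z \<le> p \<bullet> y"
  proof -
    have "continuous_on K (\<lambda>y. p \<bullet> y)" by (intro continuous_intros)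
    from continuous_attains_sup[OF assms(1,2) this] show ?thesis using that by blast
  qed
  have "supf K p = p \<bullet> y" unfolding supf_def
    using y by (intro cSup_eq_maximum) auto
  then show ?thesis using that y by auto
qed

lemma supf_lipschitz:
  assumes "compact K" "K \<noteq> {}" "K \<subseteq> cball 0 M"
  shows "supf K p - supf K q \<le> M * norm (p - q)"
proof -
  obtain y where y: "y \<in> K" "supf K p = p \<bullet> y" using supf_attained assms by metis
  have "p \<bullet> y - q \<bullet> y = (p - q) \<bullet> y" by (simp add: inner_diff_left)
  also have "\<dots> \<le> norm (p - q) * norm y" using norm_cauchy_schwarz by blast
  also have "\<dots> \<le> norm (p - q) * M" using y assms by (intro mult_left_mono) auto
  finally show ?thesis using supf_upper[OF assms(1) y(1), of q] y by (simp add: algebra_simps)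
qed

lemma supf_cont:
  assumes "compact K" "K \<noteq> {}" "K \<subseteq> cball 0 M"
  shows "continuous_on UNIV (supf K)"
proof (rule lipschitz_on_continuous_on)
  show "M-lipschitz_on UNIV (supf K)"
  proof (rule lipschitz_onI)
    fix p q
    show "dist (supf K p) (supf K q) \<le> M * dist p q"
      using supf_lipschitz[OF assms, of p q] supf_lipschitz[OF assms, of q p]
      by (simp add: dist_real_def dist_norm norm_minus_commute abs_le_iff)
  next
    obtain y where "y \<in> K" using assms by auto
    then have "norm y \<le> M" using assms(3) by auto
    then show "0 \<le> M" by (meson norm_ge_zero order_trans)
  qed
qed

lemma supf_bound:
  assumes "compact K" "K \<noteq> {}" "K \<subseteq> cball 0 M"
  shows "\<bar>supf K p\<bar> \<le> M * norm p"
proof -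
  obtain y where y: "y \<in> K" "supf K p = p \<bullet> y" using supf_attained assms by metis
  have "\<bar>p \<bullet> y\<bar> \<le> norm p * norm y" by (rule Cauchy_Schwarz_ineq2)
  also have "\<dots> \<le> norm p * M" using y assms by (intro mult_left_mono) auto
  finally show ?thesis using y by (simp add: mult.commute)
qed

lemma sphere_measure_sets[simp, measurable_cong]: "sets sphere_measure = sets borel"
  unfolding sphere_measure_def by simp

lemma space_sphere_measure[simp]: "space sphere_measure = UNIV"
  unfolding sphere_measure_def by simp

lemma finite_sphere_measure: "finite_measure (sphere_measure :: 'b::euclidean_space measure)"
proof (rule finite_measureI)
  let ?B = "ball (0::'b) 1"
  have pos: "emeasure lborel ?B \<noteq> 0"
  proof -
    have "0 < Henstock_Kurzweil_Integration.content ?B" by (rule content_ball_pos) simp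
    moreover have "emeasure lborel ?B = ennreal (Henstock_Kurzweil_Integration.content ?B)"
      using emeasure_lborel_ball_finite[of "0::'b" 1] by (simp add: emeasure_eq_ennreal_measure)
    ultimately show ?thesis by simp
  qed
  have "emeasure (sphere_measure :: 'b measure) (space sphere_measure)
        = emeasure (uniform_measure lborel ?B) (sgn -` UNIV \<inter> space (uniform_measure lborel ?B))"
    unfolding sphere_measure_def by (subst emeasure_distr) auto
  also have "\<dots> = emeasure lborel ?B / emeasure lborel ?B"
    by (subst emeasure_uniform_measure) auto
  also have "\<dots> = 1" using pos emeasure_lborel_ball_finite[of "0::'b" 1]
    by (intro ennreal_divide_self) auto
  finally show "emeasure (sphere_measure :: 'b measure) (space sphere_measure) \<noteq> \<infinity>" by simp
qed

lemma AE_sphere_norm: "AE p in (sphere_measure :: 'b::euclidean_space measure). norm p \<le> 1"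
proof -
  have "AE x in uniform_measure lborel (ball (0::'b) 1). norm (sgn x) \<le> 1"
    by (auto simp: norm_sgn)
  then show ?thesis unfolding sphere_measure_def
    by (subst AE_distr_iff) auto
qed



lemma steiner_conv:
  fixes K :: "nat \<Rightarrow> 'b::euclidean_space set"
  assumes cK: "\<And>i. compact (K i)" "\<And>i. K i \<noteq> {}" "\<And>i. K i \<subseteq> cball 0 M"
    and cK0: "compact K0" "K0 \<noteq> {}" "K0 \<subseteq> cball 0 M"
    and lim: "\<And>p. (\<lambda>i. supf (K i) p) \<longlonglongrightarrow> supf K0 p"
  shows "(\<lambda>i. steiner_point (K i)) \<longlonglongrightarrow> steiner_point K0"
proof -
  have M0: "0 \<le> M"
  proof -
    obtain y where "y \<in> K0" using cK0 by auto
    then have "norm y \<le> M" using cK0(3) by auto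
    then show "0 \<le> M" by (meson norm_ge_zero order_trans)
  qed
  have meas: "(\<lambda>p. supf L p *\<^sub>R p) \<in> borel_measurable sphere_measure"
    if "compact L" "L \<noteq> {}" "L \<subseteq> cball 0 M" for L :: "'b set"
  proof -
    have c: "continuous_on UNIV (\<lambda>p. supf L p *\<^sub>R p)"
      using supf_cont[OF that] by (rule continuous_on_scaleR) (rule continuous_on_id)
    have "(\<lambda>p. supf L p *\<^sub>R p) \<in> borel_measurable borel"
      using c by (rule borel_measurable_continuous_onI)
    then show ?thesis by (subst measurable_cong_sets[OF sphere_measure_sets refl])
  qed
  have bnd: "AE p in sphere_measure. norm (supf L p *\<^sub>R p) \<le> M"
    if "compact L" "L \<noteq> {}" "L \<subseteq> cball 0 M" for L :: "'b set"
    using AE_sphere_norm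
  proof (rule AE_mp, intro AE_I2 impI)
    fix p :: 'b assume np: "norm p \<le> 1"
    have "norm (supf L p *\<^sub>R p) = \<bar>supf L p\<bar> * norm p" by simp
    also have "\<dots> \<le> (M * norm p) * norm p"
      using supf_bound[OF that] by (intro mult_right_mono) auto
    also have "\<dots> \<le> M * 1 * 1" using np M0
      by (intro mult_mono mult_left_mono) auto
    finally show "norm (supf L p *\<^sub>R p) \<le> M" by simp
  qed
  have "(\<lambda>i. \<integral>p. supf (K i) p *\<^sub>R p \<partial>sphere_measure) \<longlonglongrightarrow> (\<integral>p. supf K0 p *\<^sub>R p \<partial>sphere_measure)"
  proof (rule integral_dominated_convergence[where w = "\<lambda>_. M"])
    show "(\<lambda>p. supf K0 p *\<^sub>R p) \<in> borel_measurable sphere_measure" by (rule meas[OF cK0])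
    show "(\<lambda>p. supf (K i) p *\<^sub>R p) \<in> borel_measurable sphere_measure" for i by (rule meas[OF cK(1,2,3)])
    show "integrable sphere_measure (\<lambda>_. M)"
      using finite_sphere_measure by (rule finite_measure.integrable_const)
    show "AE p in sphere_measure. (\<lambda>i. supf (K i) p *\<^sub>R p) \<longlonglongrightarrow> supf K0 p *\<^sub>R p"
      by (intro AE_I2 tendsto_scaleR lim tendsto_const)
    show "AE p in sphere_measure. norm (supf (K i) p *\<^sub>R p) \<le> M" for i by (rule bnd[OF cK(1,2,3)])
  qed
  then have "(\<lambda>i. real DIM('b) *\<^sub>R (\<integral>p. supf (K i) p *\<^sub>R p \<partial>sphere_measure))
     \<longlonglongrightarrow> real DIM('b) *\<^sub>R (\<integral>p. supf K0 p *\<^sub>R p \<partial>sphere_measure)"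
    by (rule tendsto_scaleR[OF tendsto_const])
  then show ?thesis unfolding steiner_point_def supf_def .
qed



definition Eg :: "('a::real_inner \<Rightarrow> real) \<Rightarrow> ('a \<times> real) set" where
  "Eg G = {(v, \<eta>). \<forall>p. v \<bullet> p - G p \<le> \<eta>}"

definition Phg :: "('a::euclidean_space \<Rightarrow> real) \<Rightarrow> 'a \<times> real \<Rightarrow> ('a \<times> real) set" where
  "Phg G a = Eg G \<inter> cball a (2 * infdist a (Eg G))"

lemma E_set_eq: "E_set H t x = Eg (H t x)"
  unfolding E_set_def epi_def conj_H_def Eg_def
  by (auto simp: SUP_le_iff)

lemma e_sel_eq: "e_sel H t x a = steiner_point (Phg (H t x) a)"
  unfolding e_sel_def Phi_set_def Phg_def E_set_eq ..

lemma Eg_mem: "(v, \<eta>) \<in> Eg G \<longleftrightarrow> (\<forall>p. v \<bullet> p - G p \<le> \<eta>)"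
  unfolding Eg_def by simp

lemma Eg_inter: "Eg G = (\<Inter>p. {z. inner (p, -1::real) z \<le> G p})"
  unfolding Eg_def by (force simp: inner_Pair algebra_simps inner_commute)

lemma Eg_closed: "closed (Eg (G::'a::euclidean_space \<Rightarrow> real))"
  unfolding Eg_inter by (intro closed_INT ballI closed_halfspace_le)

lemma Eg_convex: "convex (Eg (G::'a::euclidean_space \<Rightarrow> real))"
  unfolding Eg_inter by (intro convex_INT ballI convex_halfspace_le)

lemma growth:
  fixes f :: "'a::euclidean_space \<Rightarrow> real"
  assumes cf: "convex_on UNIV f" and R: "R > 0"
    and lb: "\<And>p. norm p \<le> R \<Longrightarrow> - A \<le> f p" and ub: "f 0 \<le> B"
    and p: "norm p \<ge> R"
  shows "B - (A + B) * norm p / R \<le> f p"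
proof -
  define l where "l = R / norm p"
  have np: "norm p > 0" using p R by linarith
  have l0: "0 < l" "l \<le> 1" using np p R by (auto simp: l_def field_simps)
  have "f ((1 - l) *\<^sub>R 0 + l *\<^sub>R p) \<le> (1 - l) * f 0 + l * f p"
    using convex_onD[OF cf, of l 0 p] l0 by auto
  moreover have "norm (l *\<^sub>R p) = R" using np R by (simp add: l_def)
  then have "- A \<le> f (l *\<^sub>R p)" using lb by simp
  ultimately have "- A \<le> (1 - l) * B + l * f p"
    using ub l0 by (smt (verit) mult_left_mono scaleR_zero_right add_0)
  then have "(- A - (1 - l) * B) / l \<le> f p" using l0 by (simp add: divide_le_eq algebra_simps)
  moreover have "(- A - (1 - l) * B) / l = B - (A + B) * norm p / R"
    using l0 np R by (simp add: l_def field_simps)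
  ultimately show ?thesis by simp
qed



lemma sandwich:
  fixes G :: "'a::euclidean_space \<Rightarrow> real"
  assumes cG: "convex_on UNIV G" and e: "e \<ge> 0"
    and lb: "\<And>p. v \<bullet> p - e * norm p - c \<le> G p"
  shows "\<exists>\<alpha>. norm (\<alpha> - v) \<le> e \<and> (\<forall>p. \<alpha> \<bullet> p - G p \<le> c)"
proof -
  define g where "g p = v \<bullet> p - e * norm p - c" for p
  define S where "S = {z :: 'a \<times> real. G (fst z) \<le> snd z}"
  define T where "T = {z :: 'a \<times> real. snd z < g (fst z)}"
  have gconc: "u * g a + w * g b \<le> g (u *\<^sub>R a + w *\<^sub>R b)"
    if "u \<ge> 0" "w \<ge> 0" "u + w = 1" for u w a b
  proof -
    have "norm (u *\<^sub>R a + w *\<^sub>R b) \<le> u * norm a + w * norm b"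
      using norm_triangle_ineq[of "u *\<^sub>R a" "w *\<^sub>R b"] that by simp
    then have "e * norm (u *\<^sub>R a + w *\<^sub>R b) \<le> e * (u * norm a + w * norm b)"
      using e by (rule mult_left_mono)
    moreover have "c = u * c + w * c" using that by algebra
    ultimately show ?thesis using that unfolding g_def
      by (simp add: inner_add_right algebra_simps)
  qed
  have convS: "convex S"
  proof -
    have "convex (epigraph UNIV G)" using cG by (simp add: convex_epigraph)
    moreover have "epigraph UNIV G = S" unfolding epigraph_def S_def by auto
    ultimately show ?thesis by simp
  qed
  have convT: "convex T"
  proof (rule convexI)
    fix x y :: "'a \<times> real" and u w :: real
    assume xy: "x \<in> T" "y \<in> T" and uw0: "0 \<le> u" "0 \<le> w" "u + w = 1"
    then have uw: "0 \<le> u \<and> 0 \<le> w \<and> u + w = 1" by simp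
    have "snd x < g (fst x)" "snd y < g (fst y)" using xy unfolding T_def by auto
    then have "u * snd x + w * snd y < u * g (fst x) + w * g (fst y)"
    proof (cases "u = 0")
      case True then show ?thesis using uw \<open>snd y < g (fst y)\<close> by simp
    next
      case False
      then have "u * snd x < u * g (fst x)" using uw \<open>snd x < g (fst x)\<close> by (intro mult_strict_left_mono) auto
      moreover have "w * snd y \<le> w * g (fst y)" using uw \<open>snd y < g (fst y)\<close> by (intro mult_left_mono) auto
      ultimately show ?thesis by linarith
    qed
    also have "\<dots> \<le> g (u *\<^sub>R fst x + w *\<^sub>R fst y)" using gconc uw by blast
    finally show "u *\<^sub>R x + w *\<^sub>R y \<in> T" unfolding T_def by simp
  qed
  have neS: "S \<noteq> {}" using S_def by (metis (mono_tags) empty_iff mem_Collect_eq order_refl snd_conv fst_conv)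
  have neT: "T \<noteq> {}"
  proof -
    have "(0, g 0 - 1) \<in> T" unfolding T_def by simp
    then show ?thesis by blast
  qed
  have disj: "S \<inter> T = {}"
  proof -
    have "False" if "z \<in> S" "z \<in> T" for z
      using that lb[of "fst z"] unfolding S_def T_def g_def by auto
    then show ?thesis by blast
  qed
  obtain a b where ab: "a \<noteq> 0" "\<forall>x\<in>S. inner a x \<le> b" "\<forall>x\<in>T. inner a x \<ge> b"
    using separating_hyperplane_sets[OF convS convT neS neT disj] by blast
  obtain q \<beta> where a: "a = (q, \<beta>)" by (cases a)
  have hS: "q \<bullet> p + \<beta> * \<zeta> \<le> b" if "G p \<le> \<zeta>" for p \<zeta>
    using ab(2) that unfolding a S_def by (auto simp: inner_Pair)
  have hT: "b \<le> q \<bullet> p + \<beta> * \<zeta>" if "\<zeta> < g p" for p \<zeta>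
    using ab(3) that unfolding a T_def by (auto simp: inner_Pair)
  have b_le: "\<beta> \<le> 0"
  proof (rule ccontr)
    assume "\<not> \<beta> \<le> 0"
    then have bp: "\<beta> > 0" by simp
    define \<zeta> where "\<zeta> = G 0 + (\<bar>b\<bar> + \<bar>\<beta> * G 0\<bar> + 1) / \<beta>"
    have "G 0 \<le> \<zeta>" using bp unfolding \<zeta>_def by simp
    then have "q \<bullet> 0 + \<beta> * \<zeta> \<le> b" by (rule hS)
    moreover have "\<beta> * \<zeta> = \<beta> * G 0 + (\<bar>b\<bar> + \<bar>\<beta> * G 0\<bar> + 1)"
      using bp unfolding \<zeta>_def by (simp add: field_simps)
    moreover have "q \<bullet> 0 = 0" by simp
    ultimately show False using abs_ge_self[of b] abs_ge_zero[of "\<beta> * G 0"] by linarith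
  qed
  have b_ne: "\<beta> \<noteq> 0"
  proof
    assume b0: "\<beta> = 0"
    then have q0: "q \<noteq> 0" using ab(1) a by (auto simp: zero_prod_def)
    then have qq: "q \<bullet> q > 0" by simp
    define p where "p = ((\<bar>b\<bar> + 1) / (q \<bullet> q)) *\<^sub>R q"
    have "q \<bullet> p + \<beta> * G p \<le> b" by (rule hS) simp
    moreover have "q \<bullet> p = \<bar>b\<bar> + 1" using qq unfolding p_def by simp
    ultimately show False using b0 abs_ge_self[of b] by simp
  qed
  have bneg: "\<beta> < 0" using b_le b_ne by simp
  define \<alpha> where "\<alpha> = (1 / - \<beta>) *\<^sub>R q"
  define c' where "c' = b / - \<beta>"
  have divi: "\<alpha> \<bullet> p + (-1) * \<zeta> = (q \<bullet> p + \<beta> * \<zeta>) / - \<beta>" for p \<zeta>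
    using bneg unfolding \<alpha>_def by (simp add: field_simps)
  have up: "\<alpha> \<bullet> p - G p \<le> c'" for p
  proof -
    have "q \<bullet> p + \<beta> * G p \<le> b" by (rule hS) simp
    then have "(q \<bullet> p + \<beta> * G p) / - \<beta> \<le> b / - \<beta>" using bneg by (intro divide_right_mono) auto
    then show ?thesis using divi[of p "G p"] unfolding c'_def by simp
  qed
  have lo: "c' \<le> \<alpha> \<bullet> p - g p" for p
  proof (rule field_le_epsilon)
    fix s :: real assume s: "s > 0"
    have "b \<le> q \<bullet> p + \<beta> * (g p - s)" using s by (intro hT) simp
    then have "b / - \<beta> \<le> (q \<bullet> p + \<beta> * (g p - s)) / - \<beta>" using bneg by (intro divide_right_mono) auto
    then show "c' \<le> \<alpha> \<bullet> p - g p + s" using divi[of p "g p - s"] unfolding c'_def by simp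
  qed
  have cc: "c' \<le> c" using lo[of 0] unfolding g_def by simp
  have nrm: "norm (\<alpha> - v) \<le> e"
  proof (rule ccontr)
    assume "\<not> norm (\<alpha> - v) \<le> e"
    then have d: "norm (\<alpha> - v) > e" by simp
    define d where "d = norm (\<alpha> - v)"
    have dpos: "d > 0" "d - e > 0" using d e unfolding d_def by auto
    define t where "t = (\<bar>c'\<bar> + \<bar>c\<bar> + 1) / (d * (d - e))"
    have tpos: "t > 0" using dpos unfolding t_def by (simp add: zero_less_mult_iff)
    define p where "p = (- t) *\<^sub>R (\<alpha> - v)"
    have "\<alpha> \<bullet> p - g p = (\<alpha> - v) \<bullet> p + e * norm p + c" unfolding g_def by (simp add: inner_diff_left)
    also have "(\<alpha> - v) \<bullet> p = - t * d * d" unfolding p_def d_def by (simp add: power2_norm_eq_inner[symmetric] power2_eq_square)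
    also have "norm p = t * d" unfolding p_def d_def using tpos by simp
    finally have "\<alpha> \<bullet> p - g p = c - t * (d * (d - e))" by (simp add: algebra_simps)
    also have "t * (d * (d - e)) = \<bar>c'\<bar> + \<bar>c\<bar> + 1" unfolding t_def using dpos by simp
    finally have "\<alpha> \<bullet> p - g p < c'" by linarith
    then show False using lo[of p] by simp
  qed
  show ?thesis using nrm up cc by (intro exI[of _ \<alpha>]) (auto intro: order_trans)
qed



lemma convex_lower:
  fixes G :: "'a::euclidean_space \<Rightarrow> real"
  assumes cG: "convex_on UNIV G"
  shows "\<exists>L c. L \<ge> 0 \<and> (\<forall>p. - L * norm p - c \<le> G p)"
proof -
  have cont: "continuous_on (cball 0 1) G"
    using convex_on_continuous[OF open_UNIV cG] by (rule continuous_on_subset) simp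
  obtain m where m: "m \<in> cball (0::'a) 1" "\<And>y. y \<in> cball 0 1 \<Longrightarrow> G m \<le> G y"
    using continuous_attains_inf[OF compact_cball _ cont] by fastforce
  define A where "A = - G m"
  define B where "B = G 0"
  have lb: "- A \<le> G p" if "norm p \<le> 1" for p using m that unfolding A_def by simp
  have gr: "B - (A + B) * norm p / 1 \<le> G p" if "norm p \<ge> 1" for p
    by (rule growth[OF cG _ lb]) (use that in \<open>auto simp: B_def\<close>)
  have "- \<bar>A + B\<bar> * norm p - (\<bar>A\<bar> + \<bar>B\<bar>) \<le> G p" for p
  proof (cases "norm p \<le> 1")
    case True
    have "0 \<le> \<bar>A + B\<bar> * norm p" by simp
    then show ?thesis using lb[of p] True abs_ge_self[of "-A"] abs_ge_zero[of B] by linarith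
  next
    case False
    then have "B - (A + B) * norm p / 1 \<le> G p" by (intro gr) simp
    moreover have "- \<bar>A + B\<bar> * norm p \<le> - (A + B) * norm p"
      by (intro mult_right_mono) auto
    ultimately show ?thesis using abs_ge_self[of B] abs_ge_zero[of A] by linarith
  qed
  then show ?thesis by (intro exI[of _ "\<bar>A + B\<bar>"] exI[of _ "\<bar>A\<bar> + \<bar>B\<bar>"]) auto
qed

lemma Eg_nonempty:
  fixes G :: "'a::euclidean_space \<Rightarrow> real"
  assumes cG: "convex_on UNIV G"
  shows "Eg G \<noteq> {}"
proof -
  obtain L c where L: "L \<ge> 0" "\<And>p. - L * norm p - c \<le> G p" using convex_lower[OF cG] by blast
  have "\<exists>\<alpha>. norm (\<alpha> - 0) \<le> L \<and> (\<forall>p. \<alpha> \<bullet> p - G p \<le> c)"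
    by (rule sandwich[OF cG L(1)]) (use L(2) in simp)
  then obtain \<alpha> where "\<forall>p. \<alpha> \<bullet> p - G p \<le> c" by blast
  then have "(\<alpha>, c) \<in> Eg G" by (simp add: Eg_mem)
  then show ?thesis by blast
qed

locale conv_setup =
  fixes G :: "nat \<Rightarrow> 'a::euclidean_space \<Rightarrow> real" and G0 :: "'a \<Rightarrow> real"
  assumes cvx: "\<And>i. convex_on UNIV (G i)" and cvx0: "convex_on UNIV G0"
    and unifc: "\<And>R e. e > 0 \<Longrightarrow> eventually (\<lambda>i. \<forall>p. norm p \<le> R \<longrightarrow> \<bar>G i p - G0 p\<bar> < e) sequentially"
begin

lemma ptw: "(\<lambda>i. G i p) \<longlonglongrightarrow> G0 p"
  unfolding tendsto_iff dist_real_def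
proof (intro allI impI)
  fix e :: real assume "e > 0"
  from unifc[OF this, of "norm p"] show "\<forall>\<^sub>F i in sequentially. \<bar>G i p - G0 p\<bar> < e"
    by eventually_elim auto
qed

lemma K1:
  fixes r :: "nat \<Rightarrow> nat" and z :: "nat \<Rightarrow> 'a \<times> real"
  assumes r: "strict_mono r" and z: "\<And>j. z j \<in> Eg (G (r j))" and lim: "z \<longlonglongrightarrow> l"
  shows "l \<in> Eg G0"
proof -
  obtain v \<eta> where l: "l = (v, \<eta>)" by (cases l)
  have "v \<bullet> p - G0 p \<le> \<eta>" for p
  proof -
    have "(\<lambda>j. fst (z j) \<bullet> p - G (r j) p) \<longlonglongrightarrow> v \<bullet> p - G0 p"
    proof (intro tendsto_intros)
      show "(\<lambda>j. fst (z j)) \<longlonglongrightarrow> v" using tendsto_fst[OF lim] l by simp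
      show "(\<lambda>j. G (r j) p) \<longlonglongrightarrow> G0 p" using LIMSEQ_subseq_LIMSEQ[OF ptw r] by (simp add: o_def)
    qed
    moreover have "(\<lambda>j. snd (z j)) \<longlonglongrightarrow> \<eta>" using tendsto_snd[OF lim] l by simp
    moreover have "fst (z j) \<bullet> p - G (r j) p \<le> snd (z j)" for j
      using z[of j] by (cases "z j") (simp add: Eg_mem)
    ultimately show ?thesis by (intro LIMSEQ_le) auto
  qed
  then show ?thesis using l by (simp add: Eg_mem)
qed

lemma K1':
  fixes r :: "nat \<Rightarrow> nat" and z :: "nat \<Rightarrow> 'a \<times> real"
  assumes r: "strict_mono r" and z: "\<And>j. z j \<in> Eg (G (r j))" and b: "bounded (range z)"
  shows "\<exists>s l. strict_mono s \<and> (z \<circ> s) \<longlonglongrightarrow> l \<and> l \<in> Eg G0"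
proof -
  have "compact (closure (range z))" using b by (simp add: compact_closure)
  then have sc: "seq_compact (closure (range z))" by (rule compact_imp_seq_compact)
  have zin: "\<forall>n. z n \<in> closure (range z)"
  proof
    fix n show "z n \<in> closure (range z)" by (rule closure_subset[THEN subsetD]) (rule rangeI)
  qed
  obtain l s where s0: "l \<in> closure (range z)" and s: "strict_mono s" "(z \<circ> s) \<longlonglongrightarrow> l"
    by (rule seq_compactE[OF sc zin])
  have "l \<in> Eg G0"
    by (rule K1[of "r \<circ> s" "z \<circ> s"]) (use r s z in \<open>auto intro: strict_mono_o\<close>)
  then show ?thesis using s by blast
qed

end


context conv_setup begin
lemma K2:
  assumes z: "z \<in> Eg G0" and e: "e > 0"
  shows "eventually (\<lambda>i. \<exists>w\<in>Eg (G i). dist w z < e) sequentially"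
proof -
  obtain v \<eta> where zv: "z = (v, \<eta>)" by (cases z)
  have zE: "\<And>p. v \<bullet> p - G0 p \<le> \<eta>" using z zv by (simp add: Eg_mem)
  define \<delta> where "\<delta> = e / 4"
  define A where "A = \<eta> + \<delta>"
  define B where "B = G0 0 + \<delta>"
  have \<delta>: "\<delta> > 0" using e by (simp add: \<delta>_def)
  have AB: "A + B > 0" using zE[of 0] \<delta> unfolding A_def B_def by simp
  define R where "R = max 1 ((A + B) / \<delta>)"
  have R: "R > 0" "(A + B) / R \<le> \<delta>"
    using AB \<delta> unfolding R_def by (auto simp: field_simps max_def)
  show ?thesis using unifc[OF \<delta>, of R]
  proof eventually_elim
    case (elim i)
    define f where "f p = G i p - v \<bullet> p" for p
    have cf: "convex_on UNIV f"
    proof (rule convex_onI)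
      fix x y :: 'a and t :: real assume t: "0 < t" "t < 1"
      have "G i ((1 - t) *\<^sub>R x + t *\<^sub>R y) \<le> (1 - t) * G i x + t * G i y"
        using convex_onD[OF cvx[of i], of t x y] t by simp
      then show "f ((1 - t) *\<^sub>R x + t *\<^sub>R y) \<le> (1 - t) * f x + t * f y"
        unfolding f_def by (simp add: inner_add_right algebra_simps)
    qed simp
    have flb: "- A \<le> f p" if "norm p \<le> R" for p
    proof -
      have "\<bar>G i p - G0 p\<bar> < \<delta>" using elim that by blast
      then show ?thesis using zE[of p] unfolding f_def A_def by linarith
    qed
    have fub: "f 0 \<le> B"
    proof -
      have "\<bar>G i 0 - G0 0\<bar> < \<delta>" using elim R by simp
      then show ?thesis unfolding f_def B_def by simp
    qed
    have low: "v \<bullet> p - \<delta> * norm p - A \<le> G i p" for p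
    proof (cases "norm p \<le> R")
      case True
      have "0 \<le> \<delta> * norm p" using \<delta> by simp
      then show ?thesis using flb[of p] True unfolding f_def by linarith
    next
      case False
      then have "B - (A + B) * norm p / R \<le> f p" by (intro growth[OF cf R(1) flb fub]) auto
      moreover have "(A + B) * norm p / R \<le> \<delta> * norm p"
      proof -
        have "(A + B) * norm p / R = ((A + B) / R) * norm p" by simp
        also have "\<dots> \<le> \<delta> * norm p" using R(2) by (rule mult_right_mono) simp
        finally show ?thesis .
      qed
      ultimately show ?thesis using AB unfolding f_def by linarith
    qed
    obtain \<alpha> where \<alpha>: "norm (\<alpha> - v) \<le> \<delta>" "\<And>p. \<alpha> \<bullet> p - G i p \<le> A"
      using sandwich[OF cvx[of i] less_imp_le[OF \<delta>] low] by blast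
    have w: "(\<alpha>, A) \<in> Eg (G i)" using \<alpha> by (simp add: Eg_mem)
    have "dist (\<alpha>, A) z \<le> \<bar>dist \<alpha> v\<bar> + \<bar>dist A \<eta>\<bar>"
      unfolding zv dist_Pair_Pair by (rule sqrt_sum_squares_le_sum_abs)
    also have "\<dots> \<le> \<delta> + \<delta>" using \<alpha> \<delta> by (simp add: dist_norm A_def dist_real_def)
    also have "\<dots> < e" using \<delta> by (simp add: \<delta>_def)
    finally show ?case using w by blast
  qed
qed

end


locale conv_setup2 = conv_setup G G0 for G :: "nat \<Rightarrow> 'a::euclidean_space \<Rightarrow> real" and G0 +
  fixes a :: "nat \<Rightarrow> 'a \<times> real" and a0 :: "'a \<times> real"
  assumes alim: "a \<longlonglongrightarrow> a0"
begin

definition "d i = infdist (a i) (Eg (G i))"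
definition "d0 = infdist a0 (Eg G0)"

lemma Ene: "Eg (G i) \<noteq> {}" "Eg G0 \<noteq> {}"
  using Eg_nonempty cvx cvx0 by auto

lemma near: "\<exists>n\<in>Eg (G i). dist (a i) n = d i"
  using infdist_attains_inf[OF Eg_closed Ene(1), where y = "a i"] unfolding d_def by metis

lemma near0: "\<exists>n\<in>Eg G0. dist a0 n = d0"
  using infdist_attains_inf[OF Eg_closed Ene(2), where y = a0] unfolding d0_def by metis

lemma asub: "strict_mono q \<Longrightarrow> (\<lambda>k. a (q k)) \<longlonglongrightarrow> a0"
  using LIMSEQ_subseq_LIMSEQ[OF alim] by (simp add: o_def)

lemma d_le: "w \<in> Eg (G i) \<Longrightarrow> d i \<le> dist (a i) w"
  unfolding d_def by (rule infdist_le)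

lemma d0_le: "w \<in> Eg G0 \<Longrightarrow> d0 \<le> dist a0 w"
  unfolding d0_def by (rule infdist_le)

lemma d_nonneg: "0 \<le> d i" "0 \<le> d0"
  unfolding d_def d0_def by (auto intro: infdist_nonneg)

lemma nf_ex: "\<exists>nf. \<forall>i. nf i \<in> Eg (G i) \<and> dist (a i) (nf i) = d i"
  using near by (intro choice) blast

lemma abound: "\<exists>Ma. \<forall>i. norm (a i) \<le> Ma"
  using convergent_imp_bounded[OF alim] unfolding bounded_iff by blast

lemma d_upper: "e > 0 \<Longrightarrow> eventually (\<lambda>i. d i < d0 + e) sequentially"
proof -
  assume e: "e > 0"
  obtain \<pi> where \<pi>: "\<pi> \<in> Eg G0" "dist a0 \<pi> = d0" using near0 by blast
  have "eventually (\<lambda>i. dist (a i) a0 < e / 2) sequentially"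
  proof -
    have "e / 2 > 0" using e by simp
    then show ?thesis using alim unfolding tendsto_iff by blast
  qed
  moreover have "eventually (\<lambda>i. \<exists>w\<in>Eg (G i). dist w \<pi> < e / 2) sequentially"
    using K2[OF \<pi>(1), of "e/2"] e by simp
  ultimately show ?thesis
  proof eventually_elim
    case (elim i)
    then obtain w where w: "w \<in> Eg (G i)" "dist w \<pi> < e / 2" by blast
    have "d i \<le> dist (a i) w" by (rule d_le[OF w(1)])
    also have "\<dots> \<le> dist (a i) a0 + dist a0 \<pi> + dist \<pi> w"
      using dist_triangle[of "a i" w a0] dist_triangle[of a0 w \<pi>] by linarith
    finally show ?case using elim w \<pi> by (simp add: dist_commute)
  qed
qed

lemma d_lower: "e > 0 \<Longrightarrow> eventually (\<lambda>i. d0 - e < d i) sequentially"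
proof (rule ccontr)
  assume e: "e > 0" and ne: "\<not> eventually (\<lambda>i. d0 - e < d i) sequentially"
  obtain r :: "nat \<Rightarrow> nat" where r: "strict_mono r" "\<And>j. \<not> d0 - e < d (r j)"
    using not_eventually_sequentiallyD[OF ne] by blast
  obtain nf where nf: "\<And>i. nf i \<in> Eg (G i)" "\<And>i. dist (a i) (nf i) = d i" using nf_ex by blast
  obtain Ma where Ma: "\<And>i. norm (a i) \<le> Ma" using abound by blast
  define z where "z j = nf (r j)" for j
  have zE: "z j \<in> Eg (G (r j))" for j unfolding z_def by (rule nf(1))
  have zb: "norm (z j) \<le> Ma + d0" for j
  proof -
    have "norm (z j) = norm (a (r j) - (a (r j) - z j))" by simp
    also have "\<dots> \<le> norm (a (r j)) + norm (a (r j) - z j)" by (rule norm_triangle_ineq4)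
    also have "\<dots> = norm (a (r j)) + dist (a (r j)) (z j)" by (simp add: dist_norm)
    also have "\<dots> \<le> Ma + d0" using Ma[of "r j"] nf(2)[of "r j"] r(2)[of j] e unfolding z_def by simp
    finally show ?thesis .
  qed
  have "bounded (range z)" unfolding bounded_iff using zb by blast
  then obtain s l where s: "strict_mono s" "(z \<circ> s) \<longlonglongrightarrow> l" "l \<in> Eg G0"
    using K1'[OF r(1) zE] by blast
  have "(\<lambda>k. dist (a (r (s k))) (z (s k))) \<longlonglongrightarrow> dist a0 l"
    using asub[of "r \<circ> s"] strict_mono_o[OF r(1) s(1)] s(2)
    by (intro tendsto_dist) (auto simp: o_def)
  moreover have "dist (a (r (s k))) (z (s k)) \<le> d0 - e" for k
    using nf(2)[of "r (s k)"] r(2)[of "s k"] unfolding z_def by simp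
  ultimately have "dist a0 l \<le> d0 - e"
    by (intro LIMSEQ_le[OF _ tendsto_const]) auto
  moreover have "d0 \<le> dist a0 l" by (rule d0_le[OF s(3)])
  ultimately show False using e by simp
qed

lemma dlim: "d \<longlonglongrightarrow> d0"
  unfolding tendsto_iff dist_real_def
proof (intro allI impI)
  fix e :: real assume "e > 0"
  from eventually_conj[OF d_upper[OF this] d_lower[OF this]]
  show "\<forall>\<^sub>F i in sequentially. \<bar>d i - d0\<bar> < e" by eventually_elim auto
qed

end



lemma norm_le_dist: "norm (y::'b::real_normed_vector) \<le> norm x + dist x y"
proof -
  have "norm y = norm (x - (x - y))" by simp
  also have "\<dots> \<le> norm x + norm (x - y)" by (rule norm_triangle_ineq4)
  finally show ?thesis by (simp add: dist_norm)
qed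

context conv_setup2 begin

definition "P i = Phg (G i) (a i)"
definition "P0 = Phg G0 a0"

lemma P_alt: "P i = Eg (G i) \<inter> cball (a i) (2 * d i)" "P0 = Eg G0 \<inter> cball a0 (2 * d0)"
  unfolding P_def P0_def Phg_def d_def d0_def by auto

lemma P_compact: "compact (P i)" "compact P0"
  unfolding P_alt by (auto intro: closed_Int_compact Eg_closed)

lemma P_ne: "P i \<noteq> {}" "P0 \<noteq> {}"
proof -
  obtain n where "n \<in> Eg (G i)" "dist (a i) n = d i" using near by blast
  then have "n \<in> P i" unfolding P_alt using d_nonneg(1)[of i] by simp
  then show "P i \<noteq> {}" by blast
  obtain n where "n \<in> Eg G0" "dist a0 n = d0" using near0 by blast
  then have "n \<in> P0" unfolding P_alt using d_nonneg(2) by simp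
  then show "P0 \<noteq> {}" by blast
qed

lemma P_bound: "\<exists>M. (\<forall>i. P i \<subseteq> cball 0 M) \<and> P0 \<subseteq> cball 0 M"
proof -
  obtain Ma where Ma: "\<And>i. norm (a i) \<le> Ma" using abound by blast
  obtain Md where Md: "\<And>i. norm (d i) \<le> Md"
    using convergent_imp_bounded[OF dlim] unfolding bounded_iff by blast
  define M where "M = max (Ma + 2 * Md) (norm a0 + 2 * d0)"
  have "P i \<subseteq> cball 0 M" for i
  proof
    fix y assume y: "y \<in> P i"
    have "norm y \<le> norm (a i) + dist (a i) y" by (rule norm_le_dist)
    also have "\<dots> \<le> Ma + 2 * Md" using y Ma[of i] Md[of i] unfolding P_alt by auto
    finally show "y \<in> cball 0 M" unfolding M_def by simp
  qed
  moreover have "P0 \<subseteq> cball 0 M"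
  proof
    fix y assume y: "y \<in> P0"
    have "norm y \<le> norm a0 + dist a0 y" by (rule norm_le_dist)
    also have "\<dots> \<le> norm a0 + 2 * d0" using y unfolding P_alt by auto
    finally show "y \<in> cball 0 M" unfolding M_def by simp
  qed
  ultimately show ?thesis by blast
qed

lemma supf_upper_ev:
  assumes e: "e > 0"
  shows "eventually (\<lambda>i. supf (P i) p < supf P0 p + e) sequentially"
proof (rule ccontr)
  assume ne: "\<not> ?thesis"
  obtain r :: "nat \<Rightarrow> nat" where r: "strict_mono r" "\<And>j. \<not> supf (P (r j)) p < supf P0 p + e"
    using not_eventually_sequentiallyD[OF ne] by blast
  have "\<forall>j. \<exists>y. y \<in> P (r j) \<and> supf (P (r j)) p = p \<bullet> y"
    using supf_attained[OF P_compact(1) P_ne(1)] by metis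
  then obtain y where y: "\<And>j. y j \<in> P (r j)" "\<And>j. supf (P (r j)) p = p \<bullet> y j"
    using choice[of "\<lambda>j y. y \<in> P (r j) \<and> supf (P (r j)) p = p \<bullet> y"] by blast
  obtain M where M: "\<And>i. P i \<subseteq> cball 0 M" using P_bound by blast
  have yE: "y j \<in> Eg (G (r j))" for j using y(1)[of j] unfolding P_alt by auto
  have "bounded (range y)"
  proof -
    have "range y \<subseteq> cball 0 M" using y(1) M by blast
    then show ?thesis using bounded_cball bounded_subset by blast
  qed
  then obtain s l where s: "strict_mono s" "(y \<circ> s) \<longlonglongrightarrow> l" "l \<in> Eg G0"
    using K1'[OF r(1) yE] by blast
  have rs: "strict_mono (r \<circ> s)" using strict_mono_o[OF r(1) s(1)] .
  have L1: "(\<lambda>k. dist (a (r (s k))) (y (s k))) \<longlonglongrightarrow> dist a0 l"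
    using asub[OF rs] s(2) by (intro tendsto_dist) (auto simp: o_def)
  have L2: "(\<lambda>k. 2 * d (r (s k))) \<longlonglongrightarrow> 2 * d0"
    using LIMSEQ_subseq_LIMSEQ[OF dlim rs] by (intro tendsto_mult tendsto_const) (simp add: o_def)
  have L3: "\<forall>k. dist (a (r (s k))) (y (s k)) \<le> 2 * d (r (s k))"
    using y(1) unfolding P_alt by auto
  have "dist a0 l \<le> 2 * d0" by (rule LIMSEQ_le[OF L1 L2]) (use L3 in blast)
  then have "l \<in> P0" using s(3) unfolding P_alt by auto
  then have "p \<bullet> l \<le> supf P0 p" by (rule supf_upper[OF P_compact(2)])
  moreover have "(\<lambda>k. p \<bullet> y (s k)) \<longlonglongrightarrow> p \<bullet> l"
    using s(2) by (intro tendsto_inner tendsto_const) (simp add: o_def)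
  then have "supf P0 p + e \<le> p \<bullet> l"
    using r(2) y(2) by (intro LIMSEQ_le[OF tendsto_const]) (auto simp: not_less)
  ultimately show False using e by simp
qed

end



context conv_setup2 begin

lemma supf_lower_ev:
  assumes e: "e > 0"
  shows "eventually (\<lambda>i. supf P0 p - e < supf (P i) p) sequentially"
proof -
  obtain y0 where y0: "y0 \<in> P0" "supf P0 p = p \<bullet> y0"
    using supf_attained[OF P_compact(2) P_ne(2)] by metis
  obtain nf where nf: "\<And>i. nf i \<in> Eg (G i)" "\<And>i. dist (a i) (nf i) = d i" using nf_ex by blast
  show ?thesis
  proof (cases "d0 = 0")
    case True
    then have "y0 = a0" using y0(1) unfolding P_alt by simp
    have "(\<lambda>i. nf i - a i) \<longlonglongrightarrow> 0"
    proof -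
      have "(\<lambda>i. norm (nf i - a i)) \<longlonglongrightarrow> 0"
        using dlim True nf(2) by (simp add: dist_norm norm_minus_commute)
      then show ?thesis by (simp add: tendsto_norm_zero_iff)
    qed
    then have "(\<lambda>i. (nf i - a i) + a i) \<longlonglongrightarrow> 0 + a0" using alim by (rule tendsto_add)
    then have "(\<lambda>i. p \<bullet> nf i) \<longlonglongrightarrow> p \<bullet> a0" by (intro tendsto_inner tendsto_const) simp
    then have "eventually (\<lambda>i. dist (p \<bullet> nf i) (p \<bullet> a0) < e) sequentially"
      using e unfolding tendsto_iff by blast
    then show ?thesis
    proof eventually_elim
      case (elim i)
      have "nf i \<in> P i" using nf[of i] d_nonneg(1)[of i] unfolding P_alt by simp
      then have "p \<bullet> nf i \<le> supf (P i) p" by (rule supf_upper[OF P_compact(1)])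
      then show ?case using elim y0(2) \<open>y0 = a0\<close> by (simp add: dist_real_def abs_less_iff)
    qed
  next
    case False
    then have d0p: "d0 > 0" using d_nonneg(2) by simp
    obtain \<pi> where \<pi>: "\<pi> \<in> Eg G0" "dist a0 \<pi> = d0" using near0 by blast
    define c where "c = norm p * norm (\<pi> - y0)"
    have c0: "c \<ge> 0" unfolding c_def by simp
    define t where "t = min (1/2) (e / (2 * (c + 1)))"
    have t: "t > 0" "t \<le> 1/2" using e c0 unfolding t_def by (auto simp: min_def)
    have tc: "t * c \<le> e / 2"
    proof -
      have "t * c \<le> (e / (2 * (c + 1))) * c" using c0 unfolding t_def by (intro mult_right_mono) auto
      also have "\<dots> = (e / 2) * (c / (c + 1))" using c0 by (simp add: field_simps)
      also have "\<dots> \<le> (e / 2) * 1" using c0 e by (intro mult_left_mono) auto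
      finally show ?thesis by simp
    qed
    define ys where "ys = (1 - t) *\<^sub>R y0 + t *\<^sub>R \<pi>"
    have y0E: "y0 \<in> Eg G0" "dist a0 y0 \<le> 2 * d0" using y0(1) unfolding P_alt by auto
    have ysE: "ys \<in> Eg G0" unfolding ys_def
      using convexD[OF Eg_convex y0E(1) \<pi>(1), of "1 - t" t] t by simp
    have "a0 - ys = (1 - t) *\<^sub>R (a0 - y0) + t *\<^sub>R (a0 - \<pi>)"
      unfolding ys_def by (simp add: algebra_simps)
    then have "dist a0 ys \<le> (1 - t) * dist a0 y0 + t * dist a0 \<pi>"
      using norm_triangle_ineq[of "(1 - t) *\<^sub>R (a0 - y0)" "t *\<^sub>R (a0 - \<pi>)"] t
      by (simp add: dist_norm)
    also have "\<dots> \<le> (1 - t) * (2 * d0) + t * d0"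
      using y0E(2) \<pi>(2) t by (intro add_mono mult_left_mono) auto
    finally have dys: "dist a0 ys \<le> 2 * d0 - t * d0" by (simp add: algebra_simps)
    have "p \<bullet> ys = p \<bullet> y0 + t * (p \<bullet> (\<pi> - y0))"
      unfolding ys_def by (simp add: inner_add_right inner_diff_right algebra_simps)
    moreover have "\<bar>p \<bullet> (\<pi> - y0)\<bar> \<le> c" unfolding c_def by (rule Cauchy_Schwarz_ineq2)
    then have "t * (p \<bullet> (\<pi> - y0)) \<ge> - (t * c)" using t
      by (metis abs_le_iff minus_le_iff mult_left_mono mult_minus_right less_imp_le)
    ultimately have pys: "p \<bullet> ys \<ge> p \<bullet> y0 - e / 2" using tc by linarith
    define g where "g = t * d0"
    have g: "g > 0" unfolding g_def using t d0p by simp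
    define \<gamma> where "\<gamma> = min (g / 3) (e / (2 * (norm p + 1)))"
    have \<gamma>: "\<gamma> > 0" "\<gamma> \<le> g / 3" "norm p * \<gamma> < e / 2"
    proof -
      have pe: "e / (2 * (norm p + 1)) > 0" using e by (intro divide_pos_pos) (auto intro: add_nonneg_pos)
      show "\<gamma> > 0" unfolding \<gamma>_def using g pe by (simp only: min_less_iff_conj) simp
      show "\<gamma> \<le> g / 3" unfolding \<gamma>_def by (rule min.cobounded1)
      have "norm p * \<gamma> \<le> norm p * (e / (2 * (norm p + 1)))" unfolding \<gamma>_def
        by (intro mult_left_mono) auto
      also have "\<dots> = (e / 2) * (norm p / (norm p + 1))" by (simp add: field_simps)
      also have "\<dots> < (e / 2) * 1"
      proof (intro mult_strict_left_mono)
        have "norm p < norm p + 1" by simp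
        then show "norm p / (norm p + 1) < 1" by (subst divide_less_eq) (auto simp: add_nonneg_pos)
      qed (use e in simp)
      finally show "norm p * \<gamma> < e / 2" by simp
    qed
    have ev1: "eventually (\<lambda>i. \<exists>w\<in>Eg (G i). dist w ys < \<gamma>) sequentially"
      by (rule K2[OF ysE \<gamma>(1)])
    have ev2: "eventually (\<lambda>i. dist (a i) a0 < g / 3) sequentially"
    proof -
      have "g / 3 > 0" using g by simp
      then show ?thesis using alim unfolding tendsto_iff by blast
    qed
    have ev3: "eventually (\<lambda>i. d0 - g / 6 < d i) sequentially"
      using d_lower[of "g / 6"] g by simp
    from ev1 ev2 ev3 show ?thesis
    proof eventually_elim
      case (elim i)
      then obtain w where w: "w \<in> Eg (G i)" "dist w ys < \<gamma>" by blast
      have "dist (a i) w \<le> dist (a i) a0 + dist a0 ys + dist ys w"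
        using dist_triangle[of "a i" w a0] dist_triangle[of a0 w ys] by linarith
      also have "\<dots> < 2 * d i" using elim w dys \<gamma>(2) unfolding g_def by (simp add: dist_commute)
      finally have "w \<in> P i" using w unfolding P_alt by simp
      then have "p \<bullet> w \<le> supf (P i) p" by (rule supf_upper[OF P_compact(1)])
      moreover have "\<bar>p \<bullet> (w - ys)\<bar> \<le> norm p * norm (w - ys)" by (rule Cauchy_Schwarz_ineq2)
      moreover have "norm p * norm (w - ys) \<le> norm p * \<gamma>"
        using w(2) by (intro mult_left_mono) (auto simp: dist_norm)
      moreover have "p \<bullet> w = p \<bullet> ys + p \<bullet> (w - ys)" by (simp add: inner_diff_right)
      ultimately show ?case using pys \<gamma>(3) y0(2) by (simp add: abs_le_iff)
    qed
  qed
qed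

lemma P0_eq: "P0 = Phg G0 a0" unfolding P0_def ..

lemma P_eq: "P i = Phg (G i) (a i)" unfolding P_def ..

lemma supf_lim: "(\<lambda>i. supf (P i) p) \<longlonglongrightarrow> supf P0 p"
  unfolding tendsto_iff dist_real_def
proof (intro allI impI)
  fix e :: real assume "e > 0"
  from eventually_conj[OF supf_upper_ev[OF this, of p] supf_lower_ev[OF this, of p]]
  show "\<forall>\<^sub>F i in sequentially. \<bar>supf (P i) p - supf P0 p\<bar> < e" by eventually_elim auto
qed

lemma steiner_lim: "(\<lambda>i. steiner_point (P i)) \<longlonglongrightarrow> steiner_point P0"
proof -
  obtain M where M: "\<And>i. P i \<subseteq> cball 0 M" "P0 \<subseteq> cball 0 M" using P_bound by blast
  show ?thesis
    by (rule steiner_conv[OF P_compact(1) P_ne(1) M(1) P_compact(2) P_ne(2) M(2) supf_lim])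
qed

end



theorem theorem5p15:
  fixes T :: real
    and H :: "nat \<Rightarrow> real \<Rightarrow> real^'n \<Rightarrow> real^'n \<Rightarrow> real"
    and tt :: "nat \<Rightarrow> real" and xx :: "nat \<Rightarrow> real^'n" and aa :: "nat \<Rightarrow> (real^'n) \<times> real"
  assumes cont: "\<And>i. continuous_on ({0..T} \<times> UNIV \<times> UNIV) (\<lambda>(t, x, p). H i t x p)"
    and conv: "\<And>i t x. t \<in> {0..T} \<Longrightarrow> convex_on UNIV (H i t x)"
    and unif: "\<And>K. compact K \<Longrightarrow> K \<subseteq> {0..T} \<times> UNIV \<times> UNIV \<Longrightarrow>
                 uniform_limit K (\<lambda>i (t, x, p). H i t x p) (\<lambda>(t, x, p). H 0 t x p) sequentially"
    and t_in: "\<And>i. tt i \<in> {0..T}"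
    and t_lim: "(\<lambda>i. tt (Suc i)) \<longlonglongrightarrow> tt 0"
    and x_lim: "(\<lambda>i. xx (Suc i)) \<longlonglongrightarrow> xx 0"
    and a_lim: "(\<lambda>i. aa (Suc i)) \<longlonglongrightarrow> aa 0"
  shows "(\<lambda>i. e_sel (H (Suc i)) (tt (Suc i)) (xx (Suc i)) (aa (Suc i)))
           \<longlonglongrightarrow> e_sel (H 0) (tt 0) (xx 0) (aa 0)"
proof -
  define G where "G i = H (Suc i) (tt (Suc i)) (xx (Suc i))" for i
  define G0 where "G0 = H 0 (tt 0) (xx 0)"
  define F where "F i = (\<lambda>(t, x, p). H i t x p)" for i
  have unifc: "eventually (\<lambda>i. \<forall>p. norm p \<le> R \<longrightarrow> \<bar>G i p - G0 p\<bar> < e) sequentially"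
    if e: "e > 0" for R e
  proof -
    define St where "St = insert (tt 0) (range (\<lambda>i. tt (Suc i)))"
    define Sx where "Sx = insert (xx 0) (range (\<lambda>i. xx (Suc i)))"
    define K where "K = St \<times> Sx \<times> cball (0::real^'n) R"
    have cK: "compact K" unfolding K_def St_def Sx_def
      using compact_sequence_with_limit[OF t_lim] compact_sequence_with_limit[OF x_lim]
      by (intro compact_Times compact_cball) auto
    have sK: "K \<subseteq> {0..T} \<times> UNIV \<times> UNIV"
      unfolding K_def St_def using t_in by auto
    have e2: "e / 2 > 0" using e by simp
    have ev1: "eventually (\<lambda>i. \<forall>z\<in>K. dist (F i z) (F 0 z) < e / 2) sequentially"
      using uniform_limitD[OF unif[OF cK sK] e2] unfolding F_def by simp
    then have ev1': "eventually (\<lambda>i. \<forall>z\<in>K. dist (F (Suc i) z) (F 0 z) < e / 2) sequentially"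
      by (rule eventually_sequentially_Suc[THEN iffD2])
    have "continuous_on K (F 0)" unfolding F_def by (rule continuous_on_subset[OF cont sK])
    then have "uniformly_continuous_on K (F 0)" using cK by (rule compact_uniformly_continuous)
    then obtain \<delta> where \<delta>: "\<delta> > 0" "\<And>z z'. z \<in> K \<Longrightarrow> z' \<in> K \<Longrightarrow> dist z' z < \<delta> \<Longrightarrow> dist (F 0 z') (F 0 z) < e / 2"
      unfolding uniformly_continuous_on_def using e2 by metis
    have d2: "\<delta> / 2 > 0" using \<delta> by simp
    have ev2: "eventually (\<lambda>i. dist (tt (Suc i)) (tt 0) < \<delta> / 2) sequentially"
      using t_lim d2 unfolding tendsto_iff by blast
    have ev3: "eventually (\<lambda>i. dist (xx (Suc i)) (xx 0) < \<delta> / 2) sequentially"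
      using x_lim d2 unfolding tendsto_iff by blast
    from ev1' ev2 ev3 show ?thesis
    proof eventually_elim
      case (elim i)
      show ?case
      proof (intro allI impI)
        fix p :: "real^'n" assume p: "norm p \<le> R"
        define z' where "z' = (tt (Suc i), xx (Suc i), p)"
        define z where "z = (tt 0, xx 0, p)"
        have zK: "z \<in> K" "z' \<in> K" unfolding z_def z'_def K_def St_def Sx_def using p by auto
        have "dist z' z \<le> \<bar>dist (tt (Suc i)) (tt 0)\<bar> + \<bar>dist (xx (Suc i), p) (xx 0, p)\<bar>"
          unfolding z_def z'_def dist_Pair_Pair[of "tt (Suc i)"] by (rule sqrt_sum_squares_le_sum_abs)
        also have "dist (xx (Suc i), p) (xx 0, p) = dist (xx (Suc i)) (xx 0)"
          by (simp add: dist_Pair_Pair)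
        finally have "dist z' z < \<delta>" using elim by simp
        then have A: "dist (F 0 z') (F 0 z) < e / 2" using \<delta>(2) zK by blast
        have B: "dist (F (Suc i) z') (F 0 z') < e / 2" using elim zK by blast
        have "\<bar>G i p - G0 p\<bar> = dist (F (Suc i) z') (F 0 z)"
          unfolding G_def G0_def F_def z_def z'_def by (simp add: dist_real_def)
        also have "\<dots> \<le> dist (F (Suc i) z') (F 0 z') + dist (F 0 z') (F 0 z)" by (rule dist_triangle)
        finally show "\<bar>G i p - G0 p\<bar> < e" using A B by simp
      qed
    qed
  qed
  interpret conv_setup2 G G0 "\<lambda>i. aa (Suc i)" "aa 0"
  proof
    show "convex_on UNIV (G i)" for i unfolding G_def by (rule conv[OF t_in])
    show "convex_on UNIV G0" unfolding G0_def by (rule conv[OF t_in])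
    show "eventually (\<lambda>i. \<forall>p. norm p \<le> R \<longrightarrow> \<bar>G i p - G0 p\<bar> < e) sequentially" if "e > 0" for R e
      using unifc[OF that] .
    show "(\<lambda>i. aa (Suc i)) \<longlonglongrightarrow> aa 0" by (rule a_lim)
  qed
  have "(\<lambda>i. steiner_point (Phg (G i) (aa (Suc i)))) \<longlonglongrightarrow> steiner_point (Phg G0 (aa 0))"
    using steiner_lim unfolding P_eq P0_eq .
  then show ?thesis unfolding e_sel_eq G_def G0_def .
qed

end
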